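(* For all real numbers $a,b,c>0$, \[ \frac{54abc + (a+b+c)^{3}}{\left(\sqrt{a^{2}+2bc} + \sqrt{2ab+c^{2}} + \sqrt{2ac+b^{2}}\right)^{2}} \leq a+b+c. \] *)

theory Defs
  imports Complex_Main
begin

end

theory Submission
  imports Defs
begin

lemma sq_bound:
  fixes P Q L :: real
  assumes "P \<ge> 0" "Q \<ge> 0" "L \<ge> 0" "L^2 \<le> P * Q"
  shows "L \<le> sqrt P * sqrt Q"
proof -
  have "L \<le> sqrt (P*Q)" using assms by (simp add: real_le_rsqrt)
  thus ?thesis by (simp add: real_sqrt_mult)
qed

lemma amgm3:
  fixes p q r :: real
  assumes "p \<ge> 0" "q \<ge> 0" "r \<ge> 0"
  shows "(p+q+r)*(p*q+q*r+r*p) \<ge> 9*(p*q*r)"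
proof -
  have "(p+q+r)*(p*q+q*r+r*p) - 9*(p*q*r) = p*(q-r)^2 + q*(r-p)^2 + r*(p-q)^2"
    by (simp add: algebra_simps power2_eq_square)
  moreover have "p*(q-r)^2 + q*(r-p)^2 + r*(p-q)^2 \<ge> 0" using assms by simp
  ultimately show ?thesis by linarith
qed

lemma core:
  fixes x y z :: real
  assumes x: "x > 0" and y: "y > 0" and z: "z > 0"
  shows "(54 * x^2 * y^2 * z^2 + (x^2 + y^2 + z^2) ^ 3) /
           (sqrt ((x^2)^2 + 2 * y^2 * z^2) + sqrt (2 * x^2 * y^2 + (z^2)^2) + sqrt (2 * x^2 * z^2 + (y^2)^2)) ^ 2
         \<le> x^2 + y^2 + z^2"
proof -
  define P where "P = (x^2)^2 + 2 * y^2 * z^2"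
  define Q where "Q = 2 * x^2 * y^2 + (z^2)^2"
  define R where "R = 2 * x^2 * z^2 + (y^2)^2"
  define s where "s = x^2 + y^2 + z^2"
  have P0: "P \<ge> 0" and Q0: "Q \<ge> 0" and R0: "R \<ge> 0" unfolding P_def Q_def R_def by simp_all
  have s0: "s > 0" unfolding s_def using x by (simp add: add_pos_nonneg)
  define L1 where "L1 = x^2*z^2 + 2*x*y^2*z"
  define L2 where "L2 = x^2*y^2 + 2*x*y*z^2"
  define L3 where "L3 = y^2*z^2 + 2*x^2*y*z"
  have e1: "P*Q - L1^2 = 2*y^2*(x^3-z^3)^2"
    unfolding P_def Q_def L1_def by (simp add: algebra_simps power2_eq_square power3_eq_cube)
  have e2: "P*R - L2^2 = 2*z^2*(x^3-y^3)^2"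
    unfolding P_def R_def L2_def by (simp add: algebra_simps power2_eq_square power3_eq_cube)
  have e3: "Q*R - L3^2 = 2*x^2*(z^3-y^3)^2"
    unfolding Q_def R_def L3_def by (simp add: algebra_simps power2_eq_square power3_eq_cube)
  have h1: "L1 \<le> sqrt P * sqrt Q"
  proof (rule sq_bound[OF P0 Q0])
    show "L1 \<ge> 0" using x y z unfolding L1_def by simp
    have "P*Q - L1^2 \<ge> 0" unfolding e1 by simp
    thus "L1^2 \<le> P*Q" by simp
  qed
  have h2: "L2 \<le> sqrt P * sqrt R"
  proof (rule sq_bound[OF P0 R0])
    show "L2 \<ge> 0" using x y z unfolding L2_def by simp
    have "P*R - L2^2 \<ge> 0" unfolding e2 by simp
    thus "L2^2 \<le> P*R" by simp
  qed
  have h3: "L3 \<le> sqrt Q * sqrt R"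
  proof (rule sq_bound[OF Q0 R0])
    show "L3 \<ge> 0" using x y z unfolding L3_def by simp
    have "Q*R - L3^2 \<ge> 0" unfolding e3 by simp
    thus "L3^2 \<le> Q*R" by simp
  qed
  define S where "S = sqrt P + sqrt Q + sqrt R"
  have SS: "S^2 = s^2 + 2*(sqrt P * sqrt Q + sqrt P * sqrt R + sqrt Q * sqrt R)"
    unfolding S_def s_def using P0 Q0 R0
    by (simp add: power2_eq_square algebra_simps P_def Q_def R_def)
  have a1: "s*(x^2*y^2+y^2*z^2+z^2*x^2) \<ge> 9*(x^2*y^2*z^2)"
    unfolding s_def using amgm3[of "x^2" "y^2" "z^2"] by (simp add: algebra_simps)
  have a2: "(x+y+z)*(x*y+y*z+z*x) \<ge> 9*(x*y*z)"
    using amgm3[of x y z] x y z by simp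
  have a3: "s \<ge> x*y+y*z+z*x"
  proof -
    have "s - (x*y+y*z+z*x) = ((x-y)^2+(y-z)^2+(z-x)^2)/2"
      unfolding s_def by (simp add: algebra_simps power2_eq_square)
    moreover have "((x-y)^2+(y-z)^2+(z-x)^2)/2 \<ge> 0" by simp
    ultimately show ?thesis by linarith
  qed
  have xyz: "x*y*z > 0" "x+y+z > 0" using x y z by auto
  have a4: "s*(x+y+z) \<ge> 9*(x*y*z)"
  proof -
    have "s*(x+y+z) \<ge> (x*y+y*z+z*x)*(x+y+z)"
      using a3 xyz by (simp add: mult_right_mono)
    thus ?thesis using a2 by (simp add: algebra_simps)
  qed
  have a5: "s*(x*y*z*(x+y+z)) \<ge> 9*(x^2*y^2*z^2)"
  proof -
    have "x*y*z*(s*(x+y+z)) \<ge> x*y*z*(9*(x*y*z))"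
      using a4 xyz by (simp add: mult_left_mono)
    thus ?thesis by (simp add: algebra_simps power2_eq_square)
  qed
  have sumL: "s*(L1+L2+L3) \<ge> 27*(x^2*y^2*z^2)"
  proof -
    have "L1+L2+L3 = (x^2*y^2+y^2*z^2+z^2*x^2) + 2*(x*y*z*(x+y+z))"
      unfolding L1_def L2_def L3_def by (simp add: algebra_simps power2_eq_square)
    hence "s*(L1+L2+L3) = s*(x^2*y^2+y^2*z^2+z^2*x^2) + 2*(s*(x*y*z*(x+y+z)))"
      by (simp add: algebra_simps)
    thus ?thesis using a1 a5 by linarith
  qed
  have "s*(L1+L2+L3) \<le> s*(sqrt P * sqrt Q + sqrt P * sqrt R + sqrt Q * sqrt R)"
    using h1 h2 h3 s0 by (simp add: mult_left_mono)
  hence main: "54 * x^2 * y^2 * z^2 + s^3 \<le> s * S^2"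
    using sumL unfolding SS by (simp add: algebra_simps power2_eq_square power3_eq_cube)
  have Spos: "S > 0"
  proof -
    have "P > 0" unfolding P_def using x by (simp add: add_pos_nonneg)
    hence "sqrt P > 0" by simp
    thus ?thesis unfolding S_def using Q0 R0 by (simp add: add_pos_nonneg)
  qed
  have "(54 * x^2 * y^2 * z^2 + s^3) / S^2 \<le> s"
    using main Spos by (simp add: divide_le_eq)
  thus ?thesis unfolding S_def s_def P_def Q_def R_def .
qed

theorem mainTheorem8:
  fixes a b c :: real
  assumes "a > 0" and "b > 0" and "c > 0"
  shows "(54 * a * b * c + (a + b + c) ^ 3) /
           (sqrt (a^2 + 2 * b * c) + sqrt (2 * a * b + c^2) + sqrt (2 * a * c + b^2)) ^ 2
         \<le> a + b + c"
proof -
  have "a = (sqrt a)^2" "b = (sqrt b)^2" "c = (sqrt c)^2" using assms by simp_all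
  moreover have "(54 * (sqrt a)^2 * (sqrt b)^2 * (sqrt c)^2 + ((sqrt a)^2 + (sqrt b)^2 + (sqrt c)^2) ^ 3) /
           (sqrt (((sqrt a)^2)^2 + 2 * (sqrt b)^2 * (sqrt c)^2) + sqrt (2 * (sqrt a)^2 * (sqrt b)^2 + ((sqrt c)^2)^2) + sqrt (2 * (sqrt a)^2 * (sqrt c)^2 + ((sqrt b)^2)^2)) ^ 2
         \<le> (sqrt a)^2 + (sqrt b)^2 + (sqrt c)^2"
    by (rule core) (use assms in auto)
  ultimately show ?thesis by simp
qed

end
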